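(* Let $M=(S,\mathrm{Act},P)$ be an MDP, $T\subseteq S$, $\mathrm{opt}\in\{\min,\max\}$, let $Z=\{s\in S\mid\Pr^{\mathrm{opt}}_s(\Diamond T)=0\}$, and let $r$ be the least fixed point of $\tilde D^{\mathrm{opt}}$. Then for all $s\in S$: $r(s)=0$ if and only if $s\in Z$.
   Context: An MDP is a tuple $M=(S,\mathrm{Act},P)$ with $S$ finite, $\mathrm{Act}$ finite, $P\colon S\times\mathrm{Act}\times S\to[0,1]$ with $\sum_{s'}P(s,a,s')\in\{0,1\}$; $\mathrm{Act}(s)=\{a\mid\sum_{s'}P(s,a,s')=1\}$ is nonempty for all $s$; $\mathrm{Post}(s,a)=\{s'\mid P(s,a,s')>0\}$. A strategy is $\sigma\colon S\to\mathrm{Act}$ with $\sigma(s)\in\mathrm{Act}(s)$, inducing a Markov chain with transitions $P(s,\sigma(s),\cdot)$; $\Pr^\sigma_s(\Diamond T)$ is the probability of visiting $T$ from $s$ and $\Pr^{\mathrm{opt}}_s(\Diamond T)=\mathrm{opt}_\sigma\Pr^\sigma_s(\Diamond T)$. $\mathbb{N}_\infty=\mathbb{N}\cup\{\infty\}$ with $\infty+1=\infty$. $\tilde D^{\mathrm{opt}}(r)(s)=\infty$ for $s\in T$ and $\mathrm{opt}_{a\in\mathrm{Act}(s)}\big(\min_{s'\in\mathrm{Post}(s,a)}r(s')+[\exists u,v\in\mathrm{Post}(s,a)\colon r(u)\ne r(v)]\big)$ for $s\notin T$ ($[\varphi]\in\{0,1\}$ the Iverson bracket); it is monotone w.r.t.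 the pointwise order, so its least fixed point exists. *)

theory Defs
  imports Complex_Main "HOL-Library.Extended_Nat"
begin

definition is_mdp :: "('s::finite \<Rightarrow> 'a::finite \<Rightarrow> 's \<Rightarrow> real) \<Rightarrow> bool" where
  "is_mdp P \<longleftrightarrow>
     (\<forall>s a s'. 0 \<le> P s a s' \<and> P s a s' \<le> 1) \<and>
     (\<forall>s a. (\<Sum>s'\<in>UNIV. P s a s') \<in> {0, 1}) \<and>
     (\<forall>s. \<exists>a. (\<Sum>s'\<in>UNIV. P s a s') = 1)"

definition Act :: "('s::finite \<Rightarrow> 'a::finite \<Rightarrow> 's \<Rightarrow> real) \<Rightarrow> 's \<Rightarrow> 'a set" where
  "Act P s = {a. (\<Sum>s'\<in>UNIV. P s a s') = 1}"

definition Post :: "('s::finite \<Rightarrow> 'a::finite \<Rightarrow> 's \<Rightarrow> real) \<Rightarrow> 's \<Rightarrow> 'a \<Rightarrow> 's set" where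
  "Post P s a = {s'. P s a s' > 0}"

definition strategies :: "('s::finite \<Rightarrow> 'a::finite \<Rightarrow> 's \<Rightarrow> real) \<Rightarrow> ('s \<Rightarrow> 'a) set" where
  "strategies P = {\<sigma>. \<forall>s. \<sigma> s \<in> Act P s}"

fun reach_within :: "('s::finite \<Rightarrow> 'a::finite \<Rightarrow> 's \<Rightarrow> real) \<Rightarrow> 's set \<Rightarrow> ('s \<Rightarrow> 'a) \<Rightarrow> nat \<Rightarrow> 's \<Rightarrow> real" where
  "reach_within P T \<sigma> 0 s = (if s \<in> T then 1 else 0)"
| "reach_within P T \<sigma> (Suc n) s =
     (if s \<in> T then 1 else (\<Sum>s'\<in>UNIV. P s (\<sigma> s) s' * reach_within P T \<sigma> n s'))"

text \<open>Pr^\<sigma>_s(\<Diamond>T): limit (supremum) of the step-bounded reachability probabilities.\<close>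
definition reach_prob :: "('s::finite \<Rightarrow> 'a::finite \<Rightarrow> 's \<Rightarrow> real) \<Rightarrow> 's set \<Rightarrow> ('s \<Rightarrow> 'a) \<Rightarrow> 's \<Rightarrow> real" where
  "reach_prob P T \<sigma> s = (SUP n. reach_within P T \<sigma> n s)"

datatype opt = OMin | OMax

definition opt_of :: "opt \<Rightarrow> 'b::linorder set \<Rightarrow> 'b" where
  "opt_of o' A = (case o' of OMin \<Rightarrow> Min A | OMax \<Rightarrow> Max A)"

text \<open>Pr^opt_s(\<Diamond>T), optimum over (memoryless deterministic) strategies.\<close>
definition reach_prob_opt :: "('s::finite \<Rightarrow> 'a::finite \<Rightarrow> 's \<Rightarrow> real) \<Rightarrow> 's set \<Rightarrow> opt \<Rightarrow> 's \<Rightarrow> real" where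
  "reach_prob_opt P T o' s = opt_of o' ((\<lambda>\<sigma>. reach_prob P T \<sigma> s) ` strategies P)"

definition Dtilde :: "('s::finite \<Rightarrow> 'a::finite \<Rightarrow> 's \<Rightarrow> real) \<Rightarrow> 's set \<Rightarrow> opt \<Rightarrow> ('s \<Rightarrow> enat) \<Rightarrow> ('s \<Rightarrow> enat)" where
  "Dtilde P T o' r s =
     (if s \<in> T then \<infinity>
      else opt_of o' ((\<lambda>a. Min (r ` Post P s a)
                           + (if \<exists>u\<in>Post P s a. \<exists>v\<in>Post P s a. r u \<noteq> r v then 1 else 0))
                      ` Act P s))"

end

theory Submission
  imports Defs
begin

lemma Post_ne:
  assumes "is_mdp P" "a \<in> Act P s" shows "Post P s a \<noteq> {}"
proof
  assume e: "Post P s a = {}"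
  have "\<forall>s'. P s a s' = 0" using e assms(1) unfolding Post_def is_mdp_def
    by (metis empty_iff less_eq_real_def mem_Collect_eq)
  then have "(\<Sum>s'\<in>UNIV. P s a s') = 0" by simp
  with assms(2) show False unfolding Act_def by simp
qed

lemma Act_ne: "is_mdp P \<Longrightarrow> Act P s \<noteq> {}"
  unfolding is_mdp_def Act_def by auto

lemma rw_bounds:
  assumes "is_mdp P"
  shows "0 \<le> reach_within P T \<sigma> n s \<and> reach_within P T \<sigma> n s \<le> 1"
proof (induction n arbitrary: s)
  case 0 then show ?case by simp
next
  case (Suc n)
  have nn: "\<And>s'. 0 \<le> P s (\<sigma> s) s'" using assms unfolding is_mdp_def by auto
  have "(\<Sum>s'\<in>UNIV. P s (\<sigma> s) s' * reach_within P T \<sigma> n s') \<le> (\<Sum>s'\<in>UNIV. P s (\<sigma> s) s')"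
    by (rule sum_mono) (metis Suc.IH mult_left_le nn)
  also have "\<dots> \<le> 1" using assms unfolding is_mdp_def by (metis insert_iff singletonD order.refl zero_le_one)
  finally have le: "(\<Sum>s'\<in>UNIV. P s (\<sigma> s) s' * reach_within P T \<sigma> n s') \<le> 1" .
  have "0 \<le> (\<Sum>s'\<in>UNIV. P s (\<sigma> s) s' * reach_within P T \<sigma> n s')"
    by (rule sum_nonneg) (simp add: Suc.IH nn)
  with le show ?case by simp
qed

lemma rw_mono_Suc:
  assumes "is_mdp P"
  shows "reach_within P T \<sigma> n s \<le> reach_within P T \<sigma> (Suc n) s"
proof (induction n arbitrary: s)
  case 0 then show ?case using rw_bounds[OF assms, of T \<sigma> "Suc 0" s] by auto
next
  case (Suc n)
  have nn: "\<And>s'. 0 \<le> P s (\<sigma> s) s'" using assms unfolding is_mdp_def by auto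
  have "(\<Sum>s'\<in>UNIV. P s (\<sigma> s) s' * reach_within P T \<sigma> n s') \<le> (\<Sum>s'\<in>UNIV. P s (\<sigma> s) s' * reach_within P T \<sigma> (Suc n) s')"
    by (rule sum_mono) (rule mult_left_mono[OF Suc.IH nn])
  then show ?case by simp
qed

lemma rw_mono:
  assumes "is_mdp P" "n \<le> m"
  shows "reach_within P T \<sigma> n s \<le> reach_within P T \<sigma> m s"
  using lift_Suc_mono_le[of "\<lambda>n. reach_within P T \<sigma> n s", OF rw_mono_Suc[OF assms(1)] assms(2)] .

lemma bdd: "is_mdp P \<Longrightarrow> bdd_above (range (\<lambda>n. reach_within P T \<sigma> n s))"
  by (rule bdd_aboveI2[where M=1]) (simp add: rw_bounds)

lemma rp_ge: "is_mdp P \<Longrightarrow> reach_within P T \<sigma> n s \<le> reach_prob P T \<sigma> s"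
  unfolding reach_prob_def by (rule cSUP_upper[OF _ bdd]) auto

lemma rp_nonneg: "is_mdp P \<Longrightarrow> 0 \<le> reach_prob P T \<sigma> s"
  by (meson order.trans rp_ge rw_bounds)

lemma rp_zeroD: "is_mdp P \<Longrightarrow> reach_prob P T \<sigma> s = 0 \<Longrightarrow> reach_within P T \<sigma> n s = 0"
  by (metis antisym rp_ge rw_bounds)

lemma rp_zeroI: "(\<And>n. reach_within P T \<sigma> n s = 0) \<Longrightarrow> reach_prob P T \<sigma> s = 0"
  unfolding reach_prob_def by simp

lemma closed_zero:
  assumes "is_mdp P" "Z \<inter> T = {}" "\<forall>z\<in>Z. Post P z (\<sigma> z) \<subseteq> Z" "z \<in> Z"
  shows "reach_within P T \<sigma> n z = 0"
  using assms(4)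
proof (induction n arbitrary: z)
  case 0 then show ?case using assms(2) by auto
next
  case (Suc n)
  have nn: "\<And>s'. 0 \<le> P z (\<sigma> z) s'" using assms unfolding is_mdp_def by auto
  have "(\<Sum>s'\<in>UNIV. P z (\<sigma> z) s' * reach_within P T \<sigma> n s') = 0"
  proof (rule sum.neutral, intro ballI)
    fix s' assume "s' \<in> (UNIV::'a set)"
    show "P z (\<sigma> z) s' * reach_within P T \<sigma> n s' = 0"
    proof (cases "P z (\<sigma> z) s' > 0")
      case True then have "s' \<in> Z" using assms(3) Suc.prems unfolding Post_def by auto
      then show ?thesis using Suc.IH by simp
    next
      case False then show ?thesis using nn[of s'] by simp
    qed
  qed
  then show ?case using Suc.prems assms(2) by auto
qed

lemma rp_zero_closed:
  assumes "is_mdp P" "reach_prob P T \<sigma> t = 0" "s' \<in> Post P t (\<sigma> t)"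
  shows "reach_prob P T \<sigma> s' = 0" "t \<notin> T"
proof -
  show tT: "t \<notin> T" using rp_zeroD[OF assms(1,2), of 0] by auto
  have nn: "\<And>s'. 0 \<le> P t (\<sigma> t) s'" using assms unfolding is_mdp_def by auto
  have pos: "P t (\<sigma> t) s' > 0" using assms(3) unfolding Post_def by auto
  show "reach_prob P T \<sigma> s' = 0"
  proof (rule rp_zeroI)
    fix n
    have "P t (\<sigma> t) s' * reach_within P T \<sigma> n s' \<le> (\<Sum>x\<in>UNIV. P t (\<sigma> t) x * reach_within P T \<sigma> n x)"
      by (rule member_le_sum) (auto simp: nn rw_bounds[OF assms(1)])
    also have "\<dots> = reach_within P T \<sigma> (Suc n) t" using tT by simp
    also have "\<dots> = 0" using rp_zeroD[OF assms(1,2)] .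
    finally have "P t (\<sigma> t) s' * reach_within P T \<sigma> n s' \<le> 0" .
    then have "reach_within P T \<sigma> n s' \<le> 0" using pos
      by (simp add: mult_le_0_iff)
    then show "reach_within P T \<sigma> n s' = 0" using rw_bounds[OF assms(1)] by (meson antisym)
  qed
qed


lemma val_zero:
  assumes "is_mdp P" "a \<in> Act P s"
  shows "(Min (q ` Post P s a) + (if \<exists>u\<in>Post P s a. \<exists>v\<in>Post P s a. q u \<noteq> q v then 1 else (0::enat)) = 0)
         \<longleftrightarrow> (\<forall>s'\<in>Post P s a. q s' = 0)"
proof -
  have ne: "Post P s a \<noteq> {}" by (rule Post_ne[OF assms])
  have fin: "finite (Post P s a)" by simp
  show ?thesis
  proof
    assume h: "\<forall>s'\<in>Post P s a. q s' = 0"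
    then have "q ` Post P s a = {0}" using ne by auto
    then show "Min (q ` Post P s a) + (if \<exists>u\<in>Post P s a. \<exists>v\<in>Post P s a. q u \<noteq> q v then 1 else (0::enat)) = 0"
      using h by auto
  next
    assume h: "Min (q ` Post P s a) + (if \<exists>u\<in>Post P s a. \<exists>v\<in>Post P s a. q u \<noteq> q v then 1 else (0::enat)) = 0"
    define M where "M = Min (q ` Post P s a)"
    define C where "C = (\<exists>u\<in>Post P s a. \<exists>v\<in>Post P s a. q u \<noteq> q v)"
    have h': "M + (if C then 1 else (0::enat)) = 0" using h unfolding M_def C_def .
    then have m: "M = 0" and c: "\<not> C" by (cases C; simp)+
    have "M \<in> q ` Post P s a" unfolding M_def using ne fin by (intro Min_in) auto
    then obtain u where u: "u \<in> Post P s a" "q u = 0" using m by auto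
    have "\<forall>v\<in>Post P s a. q v = q u" using c u(1) unfolding C_def by blast
    then show "\<forall>s'\<in>Post P s a. q s' = 0" using u(2) by simp
  qed
qed

lemma max_zero: "finite A \<Longrightarrow> A \<noteq> {} \<Longrightarrow> (Max (f ` A) = (0::enat)) \<longleftrightarrow> (\<forall>a\<in>A. f a = 0)"
proof
  assume "finite A" "A \<noteq> {}" "Max (f ` A) = 0"
  then show "\<forall>a\<in>A. f a = 0" by (metis Max_ge finite_imageI imageI le_zero_eq)
next
  assume "finite A" "A \<noteq> {}" "\<forall>a\<in>A. f a = 0"
  then have "f ` A = {0}" by auto
  then show "Max (f ` A) = 0" by simp
qed

lemma min_zero: "finite A \<Longrightarrow> A \<noteq> {} \<Longrightarrow> (Min (f ` A) = (0::enat)) \<longleftrightarrow> (\<exists>a\<in>A. f a = 0)"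
proof
  assume "finite A" "A \<noteq> {}" "Min (f ` A) = 0"
  moreover have "Min (f ` A) \<in> f ` A" using calculation by (intro Min_in) auto
  ultimately show "\<exists>a\<in>A. f a = 0" by auto
next
  assume "finite A" "A \<noteq> {}" "\<exists>a\<in>A. f a = 0"
  then obtain a where "a \<in> A" "f a = 0" by blast
  then have "Min (f ` A) \<le> 0" using \<open>finite A\<close> by (metis Min_le finite_imageI imageI)
  then show "Min (f ` A) = 0" by simp
qed

lemma G:
  assumes "is_mdp P" "s \<notin> T"
  shows "Dtilde P T o' q s = 0 \<longleftrightarrow> (case o' of OMin \<Rightarrow> \<exists>a\<in>Act P s. Post P s a \<subseteq> {t. q t = 0}
                                         | OMax \<Rightarrow> \<forall>a\<in>Act P s. Post P s a \<subseteq> {t. q t = 0})"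
proof -
  have fa: "finite (Act P s)" by simp
  have ne: "Act P s \<noteq> {}" by (rule Act_ne[OF assms(1)])
  define V where "V = (\<lambda>a. Min (q ` Post P s a) + (if \<exists>u\<in>Post P s a. \<exists>v\<in>Post P s a. q u \<noteq> q v then 1 else (0::enat)))"
  have D: "Dtilde P T o' q s = opt_of o' (V ` Act P s)" using assms(2) by (simp add: Dtilde_def V_def)
  have VZ: "\<And>a. a \<in> Act P s \<Longrightarrow> (V a = 0) = (Post P s a \<subseteq> {t. q t = 0})"
    unfolding V_def by (subst val_zero[OF assms(1)]) auto
  show ?thesis
  proof (cases o')
    case OMin
    have "Dtilde P T o' q s = 0 \<longleftrightarrow> (\<exists>a\<in>Act P s. V a = 0)"
      using D OMin min_zero[OF fa ne] by (simp add: opt_of_def)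
    also have "\<dots> \<longleftrightarrow> (\<exists>a\<in>Act P s. Post P s a \<subseteq> {t. q t = 0})" using VZ by blast
    finally show ?thesis using OMin by simp
  next
    case OMax
    have "Dtilde P T o' q s = 0 \<longleftrightarrow> (\<forall>a\<in>Act P s. V a = 0)"
      using D OMax max_zero[OF fa ne] by (simp add: opt_of_def)
    also have "\<dots> \<longleftrightarrow> (\<forall>a\<in>Act P s. Post P s a \<subseteq> {t. q t = 0})" using VZ by blast
    finally show ?thesis using OMax by simp
  qed
qed

lemma val_mono:
  assumes "is_mdp P" "a \<in> Act P s" "q \<le> q'"
  shows "Min (q ` Post P s a) + (if \<exists>u\<in>Post P s a. \<exists>v\<in>Post P s a. q u \<noteq> q v then 1 else (0::enat))
       \<le> Min (q' ` Post P s a) + (if \<exists>u\<in>Post P s a. \<exists>v\<in>Post P s a. q' u \<noteq> q' v then 1 else (0::enat))"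
proof -
  have ne: "Post P s a \<noteq> {}" by (rule Post_ne[OF assms(1,2)])
  have fin: "finite (Post P s a)" by simp
  have le: "\<And>x. q x \<le> q' x" using assms(3) by (simp add: le_fun_def)
  have mx: "Min (q ` Post P s a) \<le> q' x" if "x \<in> Post P s a" for x
  proof -
    have "Min (q ` Post P s a) \<le> q x" using fin that by simp
    then show ?thesis using le[of x] by (rule order.trans)
  qed
  have mm: "Min (q ` Post P s a) \<le> Min (q' ` Post P s a)"
    using ne fin mx by (intro Min.boundedI) auto
  show ?thesis
  proof (cases "\<exists>u\<in>Post P s a. \<exists>v\<in>Post P s a. q' u \<noteq> q' v")
    case True
    have i: "(if \<exists>u\<in>Post P s a. \<exists>v\<in>Post P s a. q u \<noteq> q v then 1 else 0) \<le> (1::enat)" by simp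
    have "Min (q ` Post P s a) + (if \<exists>u\<in>Post P s a. \<exists>v\<in>Post P s a. q u \<noteq> q v then 1 else (0::enat))
          \<le> Min (q' ` Post P s a) + 1" by (rule add_mono[OF mm i])
    then show ?thesis by (subst if_P[OF True])
  next
    case False
    then obtain c where c: "\<forall>x\<in>Post P s a. q' x = c" using ne by blast
    then have "q' ` Post P s a = {c}" using ne by auto
    then have mc: "Min (q' ` Post P s a) = c" by simp
    show ?thesis
    proof (cases "\<exists>u\<in>Post P s a. \<exists>v\<in>Post P s a. q u \<noteq> q v")
      case True
      then obtain u v where uv: "u \<in> Post P s a" "v \<in> Post P s a" "q u \<noteq> q v" by blast
      have lu: "q u \<le> c" "q v \<le> c" using le c uv by auto
      obtain w where w: "w \<in> Post P s a" "q w < c"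
      proof (cases "q u = c")
        case True
        then have "q v < c" using lu uv(3) by (simp add: order_less_le)
        then show ?thesis using that uv(2) by blast
      next
        case False
        then have "q u < c" using lu by (simp add: order_less_le)
        then show ?thesis using that uv(1) by blast
      qed
      have "Min (q ` Post P s a) \<le> q w" using w fin by auto
      then have "Min (q ` Post P s a) < c" using w(2) by (rule order.strict_trans1)
      then have "eSuc (Min (q ` Post P s a)) \<le> c" by (rule ileI1)
      then have "Min (q ` Post P s a) + 1 \<le> c + 0" by (simp add: eSuc_plus_1)
      then show ?thesis unfolding if_P[OF True] if_not_P[OF False] mc .
    next
      case False2: False
      have "Min (q ` Post P s a) + 0 \<le> Min (q' ` Post P s a) + 0" using mm by (simp only: add_0_right)
      then show ?thesis unfolding if_not_P[OF False2] if_not_P[OF False] .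
    qed
  qed
qed

lemma opt_mono:
  assumes "finite A" "A \<noteq> {}" "\<forall>a\<in>A. f a \<le> (g a::enat)"
  shows "opt_of o' (f ` A) \<le> opt_of o' (g ` A)"
proof (cases o')
  case OMin
  have "Min (f ` A) \<le> g a" if "a \<in> A" for a
  proof -
    have "Min (f ` A) \<le> f a" using assms(1) that by simp
    then show ?thesis using assms(3) that by (meson order.trans)
  qed
  then have "Min (f ` A) \<le> Min (g ` A)" using assms(1,2) by (intro Min.boundedI) auto
  then show ?thesis using OMin by (simp add: opt_of_def)
next
  case OMax
  have "f a \<le> Max (g ` A)" if "a \<in> A" for a
  proof -
    have "g a \<le> Max (g ` A)" using assms(1) that by simp
    then show ?thesis using assms(3) that by (meson order.trans)
  qed
  then have "Max (f ` A) \<le> Max (g ` A)" using assms(1,2) by (intro Max.boundedI) auto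
  then show ?thesis using OMax by (simp add: opt_of_def)
qed

lemma Dmono: assumes "is_mdp P" shows "mono (Dtilde P T o')"
proof (rule monoI, rule le_funI)
  fix q q' :: "'a \<Rightarrow> enat" and s assume "q \<le> q'"
  then show "Dtilde P T o' q s \<le> Dtilde P T o' q' s"
  proof (cases "s \<in> T")
    case True then show ?thesis by (simp add: Dtilde_def)
  next
    case False
    have "opt_of o' ((\<lambda>a. Min (q ` Post P s a) + (if \<exists>u\<in>Post P s a. \<exists>v\<in>Post P s a. q u \<noteq> q v then 1 else 0)) ` Act P s)
        \<le> opt_of o' ((\<lambda>a. Min (q' ` Post P s a) + (if \<exists>u\<in>Post P s a. \<exists>v\<in>Post P s a. q' u \<noteq> q' v then 1 else 0)) ` Act P s)"
      by (rule opt_mono[OF _ Act_ne[OF assms]]) (simp, intro ballI val_mono[OF assms _ \<open>q \<le> q'\<close>], assumption)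
    then show ?thesis unfolding Dtilde_def using False by (simp only: if_False)
  qed
qed


lemma rmin_zero:
  assumes "finite A" "A \<noteq> {}" "\<forall>a\<in>A. 0 \<le> (f a::real)"
  shows "Min (f ` A) = 0 \<longleftrightarrow> (\<exists>a\<in>A. f a = 0)"
proof
  assume h: "Min (f ` A) = 0"
  have "Min (f ` A) \<in> f ` A" using assms by (intro Min_in) auto
  then show "\<exists>a\<in>A. f a = 0" using h by auto
next
  assume "\<exists>a\<in>A. f a = 0"
  then obtain a where a: "a \<in> A" "f a = 0" by blast
  then have "Min (f ` A) \<le> 0" using assms(1) by (metis Min_le finite_imageI imageI)
  moreover have "0 \<le> Min (f ` A)" using assms by (intro Min.boundedI) auto
  ultimately show "Min (f ` A) = 0" by simp
qed

lemma rmax_zero: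
  assumes "finite A" "A \<noteq> {}" "\<forall>a\<in>A. 0 \<le> (f a::real)"
  shows "Max (f ` A) = 0 \<longleftrightarrow> (\<forall>a\<in>A. f a = 0)"
proof
  assume h: "Max (f ` A) = 0"
  show "\<forall>a\<in>A. f a = 0"
  proof
    fix a assume a: "a \<in> A"
    have "f a \<le> Max (f ` A)" using assms(1) a by simp
    moreover have "0 \<le> f a" using assms(3) a by blast
    ultimately show "f a = 0" using h by simp
  qed
next
  assume "\<forall>a\<in>A. f a = 0"
  then have "f ` A = {0}" using assms(2) by auto
  then show "Max (f ` A) = 0" by simp
qed

lemma strat_fin: "finite (strategies P)" by simp

lemma strat_ne: assumes "is_mdp P" shows "strategies P \<noteq> {}"
proof -
  have "(\<lambda>s. SOME a. a \<in> Act P s) \<in> strategies P"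
    unfolding strategies_def using Act_ne[OF assms] by (simp add: some_in_eq)
  then show ?thesis by blast
qed

lemma lfp_fix: "is_mdp P \<Longrightarrow> Dtilde P T o' (lfp (Dtilde P T o')) = lfp (Dtilde P T o')"
  using lfp_unfold[OF Dmono] by metis

lemma lfp_T: assumes "is_mdp P" "s \<in> T" shows "lfp (Dtilde P T o') s \<noteq> 0"
proof -
  have "lfp (Dtilde P T o') s = Dtilde P T o' (lfp (Dtilde P T o')) s" using lfp_fix[OF assms(1)] by metis
  also have "\<dots> = \<infinity>" using assms(2) by (simp add: Dtilde_def)
  finally show ?thesis by simp
qed

lemma lfp_zero:
  assumes "is_mdp P" "lfp (Dtilde P T o') s = 0"
  shows "s \<notin> T" "(case o' of OMin \<Rightarrow> \<exists>a\<in>Act P s. Post P s a \<subseteq> {t. lfp (Dtilde P T o') t = 0}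
                                         | OMax \<Rightarrow> \<forall>a\<in>Act P s. Post P s a \<subseteq> {t. lfp (Dtilde P T o') t = 0})"
proof -
  show nT: "s \<notin> T" using lfp_T[OF assms(1)] assms(2) by blast
  have "Dtilde P T o' (lfp (Dtilde P T o')) s = 0" using lfp_fix[OF assms(1)] assms(2) by metis
  then show "(case o' of OMin \<Rightarrow> \<exists>a\<in>Act P s. Post P s a \<subseteq> {t. lfp (Dtilde P T o') t = 0}
                                         | OMax \<Rightarrow> \<forall>a\<in>Act P s. Post P s a \<subseteq> {t. lfp (Dtilde P T o') t = 0})"
    using G[OF assms(1) nT] by blast
qed

lemma closed_sub:
  assumes "is_mdp P" "Z \<inter> T = {}"
    "\<forall>z\<in>Z. (case o' of OMin \<Rightarrow> \<exists>a\<in>Act P z. Post P z a \<subseteq> Z | OMax \<Rightarrow> \<forall>a\<in>Act P z. Post P z a \<subseteq> Z)"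
    "z \<in> Z"
  shows "lfp (Dtilde P T o') z = 0"
proof -
  define r where "r = lfp (Dtilde P T o')"
  define r' where "r' = (\<lambda>s. if s \<in> Z then 0 else r s)"
  have r'le: "r' \<le> r" unfolding r'_def by (rule le_funI) simp
  have "Dtilde P T o' r' \<le> r'"
  proof (rule le_funI)
    fix s
    show "Dtilde P T o' r' s \<le> r' s"
    proof (cases "s \<in> Z")
      case True
      then have nT: "s \<notin> T" using assms(2) by blast
      have sub: "Z \<subseteq> {t. r' t = 0}" unfolding r'_def by auto
      have "(case o' of OMin \<Rightarrow> \<exists>a\<in>Act P s. Post P s a \<subseteq> {t. r' t = 0}
                      | OMax \<Rightarrow> \<forall>a\<in>Act P s. Post P s a \<subseteq> {t. r' t = 0})"
        using assms(3) True sub by (cases o') (auto, blast+)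
      then have "Dtilde P T o' r' s = 0" using G[OF assms(1) nT] by blast
      then show ?thesis by simp
    next
      case False
      have "Dtilde P T o' r' s \<le> Dtilde P T o' r s"
        using monoD[OF Dmono[OF assms(1)] r'le] by (simp add: le_fun_def)
      also have "\<dots> = r s" unfolding r_def using lfp_fix[OF assms(1)] by metis
      finally show ?thesis using False unfolding r'_def by simp
    qed
  qed
  then have "r \<le> r'" unfolding r_def by (rule lfp_lowerbound)
  then have "r z \<le> r' z" by (simp add: le_fun_def)
  then show ?thesis using assms(4) unfolding r_def r'_def by simp
qed


primrec Wk :: "('s::finite \<Rightarrow> 'a::finite \<Rightarrow> 's \<Rightarrow> real) \<Rightarrow> 's set \<Rightarrow> nat \<Rightarrow> 's set" where
  "Wk P T 0 = T"
| "Wk P T (Suc k) = Wk P T k \<union> {s. \<exists>a\<in>Act P s. \<exists>s'\<in>Post P s a. s' \<in> Wk P T k}"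

lemma Wk_mono: "j \<le> k \<Longrightarrow> Wk P T j \<subseteq> Wk P T k"
  by (induction k) (auto simp: le_Suc_eq)

lemma W_pos:
  fixes P :: "'s::finite \<Rightarrow> 'a::finite \<Rightarrow> 's \<Rightarrow> real" and T :: "'s set"
  assumes "is_mdp P"
  defines "lev \<equiv> \<lambda>t. LEAST k. t \<in> Wk P T k"
  defines "\<sigma> \<equiv> \<lambda>t. if \<exists>a\<in>Act P t. \<exists>s'\<in>Post P t a. s' \<in> Wk P T (lev t - 1)
                  then SOME a. a \<in> Act P t \<and> (\<exists>s'\<in>Post P t a. s' \<in> Wk P T (lev t - 1))
                  else SOME a. a \<in> Act P t"
  shows "\<sigma> \<in> strategies P" "t \<in> Wk P T k \<Longrightarrow> reach_within P T \<sigma> k t > 0"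
proof -
  show "\<sigma> \<in> strategies P"
    unfolding strategies_def
  proof (intro CollectI allI)
    fix t
    show "\<sigma> t \<in> Act P t"
    proof (cases "\<exists>a\<in>Act P t. \<exists>s'\<in>Post P t a. s' \<in> Wk P T (lev t - 1)")
      case True
      then have "\<exists>a. a \<in> Act P t \<and> (\<exists>s'\<in>Post P t a. s' \<in> Wk P T (lev t - 1))" by blast
      from someI_ex[OF this] True show ?thesis unfolding \<sigma>_def by simp
    next
      case False
      then show ?thesis unfolding \<sigma>_def using Act_ne[OF assms(1)] by (simp add: some_in_eq)
    qed
  qed
  show "t \<in> Wk P T k \<Longrightarrow> reach_within P T \<sigma> k t > 0"
  proof (induction k arbitrary: t)
    case 0 then show ?case by simp
  next
    case (Suc k)
    show ?case
    proof (cases "t \<in> Wk P T k")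
      case True
      then show ?thesis using Suc.IH rw_mono_Suc[OF assms(1)] by (meson order_less_le_trans)
    next
      case False
      then have ex: "\<exists>a\<in>Act P t. \<exists>s'\<in>Post P t a. s' \<in> Wk P T k" using Suc.prems by simp
      have "lev t = Suc k" unfolding lev_def
      proof (rule Least_equality)
        show "t \<in> Wk P T (Suc k)" by (rule Suc.prems)
      next
        fix y assume "t \<in> Wk P T y"
        show "Suc k \<le> y"
        proof (rule ccontr)
          assume "\<not> Suc k \<le> y"
          then have "Wk P T y \<subseteq> Wk P T k" by (intro Wk_mono) simp
          then show False using False \<open>t \<in> Wk P T y\<close> by blast
        qed
      qed
      then have lv: "lev t - 1 = k" by simp
      have nT: "t \<notin> T" using False Wk_mono[of 0 k P T] by auto
      have "\<exists>a. a \<in> Act P t \<and> (\<exists>s'\<in>Post P t a. s' \<in> Wk P T (lev t - 1))" using ex lv by auto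
      from someI_ex[OF this] have "\<sigma> t \<in> Act P t \<and> (\<exists>s'\<in>Post P t (\<sigma> t). s' \<in> Wk P T k)"
        using ex lv unfolding \<sigma>_def by simp
      then obtain s' where s': "s' \<in> Post P t (\<sigma> t)" "s' \<in> Wk P T k" by blast
      have pos: "P t (\<sigma> t) s' > 0" using s'(1) unfolding Post_def by simp
      have nn: "\<And>x. 0 \<le> P t (\<sigma> t) x" using assms(1) unfolding is_mdp_def by auto
      have "0 < P t (\<sigma> t) s' * reach_within P T \<sigma> k s'" using pos Suc.IH[OF s'(2)] by simp
      also have "\<dots> \<le> (\<Sum>x\<in>UNIV. P t (\<sigma> t) x * reach_within P T \<sigma> k x)"
        by (rule member_le_sum) (auto simp: nn rw_bounds[OF assms(1)])
      also have "\<dots> = reach_within P T \<sigma> (Suc k) t" using nT by simp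
      finally show ?thesis .
    qed
  qed
qed

theorem lemma9:
  fixes P :: "'s::finite \<Rightarrow> 'a::finite \<Rightarrow> 's \<Rightarrow> real"
    and T :: "'s set" and o' :: opt and s :: 's
  assumes "is_mdp P"
  shows "lfp (Dtilde P T o') s = 0 \<longleftrightarrow> s \<in> {t. reach_prob_opt P T o' t = 0}"
proof -
  have nn: "\<forall>\<sigma>\<in>strategies P. 0 \<le> reach_prob P T \<sigma> t" for t using rp_nonneg[OF assms] by blast
  note fs = strat_fin[of P] strat_ne[OF assms]
  define Z0 where "Z0 = {t. lfp (Dtilde P T o') t = 0}"
  show ?thesis
  proof (cases o')
    case OMin
    have opt: "reach_prob_opt P T o' t = 0 \<longleftrightarrow> (\<exists>\<sigma>\<in>strategies P. reach_prob P T \<sigma> t = 0)" for t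
      unfolding reach_prob_opt_def opt_of_def OMin using rmin_zero[OF fs nn] by simp
    show ?thesis
    proof
      assume h: "lfp (Dtilde P T o') s = 0"
      have cl: "\<forall>t\<in>Z0. t \<notin> T \<and> (\<exists>a\<in>Act P t. Post P t a \<subseteq> Z0)"
        using lfp_zero[OF assms] OMin unfolding Z0_def by fastforce
      define \<sigma> where "\<sigma> = (\<lambda>t. if t \<in> Z0 then SOME a. a \<in> Act P t \<and> Post P t a \<subseteq> Z0 else SOME a. a \<in> Act P t)"
      have sp: "\<sigma> t \<in> Act P t \<and> (t \<in> Z0 \<longrightarrow> Post P t (\<sigma> t) \<subseteq> Z0)" for t
      proof (cases "t \<in> Z0")
        case True
        then have "\<exists>a. a \<in> Act P t \<and> Post P t a \<subseteq> Z0" using cl by blast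
        from someI_ex[OF this] True show ?thesis unfolding \<sigma>_def by simp
      next
        case False
        then show ?thesis unfolding \<sigma>_def using Act_ne[OF assms] by (simp add: some_in_eq)
      qed
      have "\<sigma> \<in> strategies P" unfolding strategies_def using sp by blast
      moreover have "reach_prob P T \<sigma> s = 0"
        by (rule rp_zeroI, rule closed_zero[OF assms, of Z0]) (use cl sp h Z0_def in auto)
      ultimately show "s \<in> {t. reach_prob_opt P T o' t = 0}" using opt by blast
    next
      assume "s \<in> {t. reach_prob_opt P T o' t = 0}"
      then obtain \<sigma> where \<sigma>: "\<sigma> \<in> strategies P" "reach_prob P T \<sigma> s = 0" using opt by blast
      define Z where "Z = {t. reach_prob P T \<sigma> t = 0}"
      have "Z \<inter> T = {}"
      proof (rule ccontr)
        assume "Z \<inter> T \<noteq> {}"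
        then obtain t where t: "t \<in> T" "reach_prob P T \<sigma> t = 0" unfolding Z_def by blast
        have "reach_within P T \<sigma> 0 t = 0" by (rule rp_zeroD[OF assms t(2)])
        then show False using t(1) by simp
      qed
      moreover have "\<forall>z\<in>Z. (case o' of OMin \<Rightarrow> \<exists>a\<in>Act P z. Post P z a \<subseteq> Z | OMax \<Rightarrow> \<forall>a\<in>Act P z. Post P z a \<subseteq> Z)"
      proof
        fix z assume "z \<in> Z"
        then have "Post P z (\<sigma> z) \<subseteq> Z" unfolding Z_def using rp_zero_closed(1)[OF assms] by blast
        moreover have "\<sigma> z \<in> Act P z" using \<sigma>(1) unfolding strategies_def by blast
        ultimately show "(case o' of OMin \<Rightarrow> \<exists>a\<in>Act P z. Post P z a \<subseteq> Z | OMax \<Rightarrow> \<forall>a\<in>Act P z. Post P z a \<subseteq> Z)"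
          using OMin by auto
      qed
      moreover have "s \<in> Z" unfolding Z_def using \<sigma>(2) by simp
      ultimately show "lfp (Dtilde P T o') s = 0" by (rule closed_sub[OF assms])
    qed
  next
    case OMax
    have opt: "reach_prob_opt P T o' t = 0 \<longleftrightarrow> (\<forall>\<sigma>\<in>strategies P. reach_prob P T \<sigma> t = 0)" for t
      unfolding reach_prob_opt_def opt_of_def OMax using rmax_zero[OF fs nn] by simp
    show ?thesis
    proof
      assume h: "lfp (Dtilde P T o') s = 0"
      have cl: "\<forall>t\<in>Z0. t \<notin> T \<and> (\<forall>a\<in>Act P t. Post P t a \<subseteq> Z0)"
        using lfp_zero[OF assms] OMax unfolding Z0_def by fastforce
      have "reach_prob P T \<sigma> s = 0" if "\<sigma> \<in> strategies P" for \<sigma>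
      proof -
        have "\<sigma> t \<in> Act P t" for t using that unfolding strategies_def by blast
        then show ?thesis
          by (intro rp_zeroI, intro closed_zero[OF assms, of Z0]) (use cl h Z0_def in auto)
      qed
      then show "s \<in> {t. reach_prob_opt P T o' t = 0}" using opt by blast
    next
      assume "s \<in> {t. reach_prob_opt P T o' t = 0}"
      then have all: "\<forall>\<sigma>\<in>strategies P. reach_prob P T \<sigma> s = 0" using opt by blast
      define Z where "Z = {t. \<forall>k. t \<notin> Wk P T k}"
      have "Z \<inter> T = {}" unfolding Z_def by (metis (mono_tags, lifting) Wk.simps(1) disjoint_iff mem_Collect_eq)
      moreover have "\<forall>z\<in>Z. (case o' of OMin \<Rightarrow> \<exists>a\<in>Act P z. Post P z a \<subseteq> Z | OMax \<Rightarrow> \<forall>a\<in>Act P z. Post P z a \<subseteq> Z)"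
      proof
        fix z assume z: "z \<in> Z"
        have "\<forall>a\<in>Act P z. Post P z a \<subseteq> Z"
        proof (intro ballI subsetI)
          fix a s' assume a: "a \<in> Act P z" "s' \<in> Post P z a"
          show "s' \<in> Z" unfolding Z_def
          proof (intro CollectI allI notI)
            fix k assume "s' \<in> Wk P T k"
            then have "z \<in> Wk P T (Suc k)" using a by auto
            then show False using z unfolding Z_def by blast
          qed
        qed
        then show "(case o' of OMin \<Rightarrow> \<exists>a\<in>Act P z. Post P z a \<subseteq> Z | OMax \<Rightarrow> \<forall>a\<in>Act P z. Post P z a \<subseteq> Z)"
          using OMax by simp
      qed
      moreover have "s \<in> Z" unfolding Z_def
      proof (intro CollectI allI notI)
        fix k assume sk: "s \<in> Wk P T k"
        obtain \<sigma>w where \<sigma>w: "\<sigma>w \<in> strategies P" "reach_within P T \<sigma>w k s > 0"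
          using W_pos(1)[OF assms, where T=T] W_pos(2)[OF assms, where T=T, OF sk] by blast
        have "0 < reach_within P T \<sigma>w k s" by (rule \<sigma>w(2))
        also have "\<dots> \<le> reach_prob P T \<sigma>w s" by (rule rp_ge[OF assms])
        also have "\<dots> = 0" using all \<sigma>w(1) by blast
        finally show False by simp
      qed
      ultimately show "lfp (Dtilde P T o') s = 0" by (rule closed_sub[OF assms])
    qed
  qed
qed

end
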